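(* Let $S\subseteq\mathbb{Z}$ and let $\mathbf{a}=(a_i)_{i=0}^n$ be any $n+1$ integers in $S$. Then for any $\mathcal{T}\subseteq\mathbb{N}$, the product $$\prod_{b\in\mathcal{T}}b^{\gamma(S,b,\mathbf{a})},\qquad \gamma(S,b,\mathbf{a}):=\sum_{0\le i<j\le n}\operatorname{ord}_b(a_i-a_j),$$ is a multiple of $0!_{S,\mathcal{T}}\,1!_{S,\mathcal{T}}\cdots n!_{S,\mathcal{T}}$.
   Context: $\mathbb{N}=\{0,1,2,\dots\}$. For an integer $b\ge0$ and $a\in\mathbb{Z}$ define $\operatorname{ord}_b(a):=\sup\{k\in\mathbb{N}: a\mathbb{Z}\subseteq b^k\mathbb{Z}\}$ (convention $0^0=1$); thus for $b\ge2$ it is the largest $k$ with $b^k\mid a$ ($+\infty$ for $a=0$), $\operatorname{ord}_0(a)=+\infty$ if $a=0$ and $0$ otherwise, and $\operatorname{ord}_1(a)=+\infty$. For nonempty $S\subseteq\mathbb{Z}$, a $b$-ordering of $S$ is a sequence $(a_i)_{i\ge0}$ in $S$ such that for each $i\ge1$, $a_i$ attains $\min_{a'\in S}\sum_{j=0}^{i-1}\operatorname{ord}_b(a'-a_j)$; the $b$-exponent sequence is $\alpha_k(S,b):=\sum_{j=0}^{k-1}\operatorname{ord}_b(a_k-a_j)$ for any $b$-ordering (independent of the choice). For $\mathcal{T}\subseteq\mathbb{N}$ the generalized factorial is $k!_{S,\mathcal{T}}:=\prod_{b\in\mathcal{T}}b^{\alpha_k(S,b)}$, with conventions $b^{+\infty}=0$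 for $b=0$ and $b\ge2$, $1^{+\infty}=1$, and $b^0=1$ for all $b\in\mathbb{N}$ (these conventions also apply to $b^{\gamma}$). *)

theory Defs
  imports Main "HOL-Library.Extended_Nat"
begin

text \<open>ord_b(a) = sup{k : aZ subseteq b^k Z}, valued in enat (infinity allowed).
  aZ subseteq b^k Z holds iff b^k divides a.\<close>
definition ordb :: "nat \<Rightarrow> int \<Rightarrow> enat" where
  "ordb b a = Sup (enat ` {k. (int b) ^ k dvd a})"

definition epow :: "nat \<Rightarrow> enat \<Rightarrow> nat" where
  "epow b e = (case e of enat m \<Rightarrow> b ^ m | \<infinity> \<Rightarrow> (if b = 1 then 1 else 0))"

text \<open>Product over a possibly infinite index set T of naturals: 0 if some factor is 0,
  otherwise the product of the factors different from 1 (which are finitely many in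
  all situations of interest).\<close>
definition prodT :: "nat set \<Rightarrow> (nat \<Rightarrow> nat) \<Rightarrow> nat" where
  "prodT T f = (if \<exists>b\<in>T. f b = 0 then 0 else prod f {b\<in>T. f b \<noteq> 1})"

definition b_ordering :: "int set \<Rightarrow> nat \<Rightarrow> (nat \<Rightarrow> int) \<Rightarrow> bool" where
  "b_ordering S b s \<longleftrightarrow> (\<forall>i. s i \<in> S) \<and>
     (\<forall>i\<ge>1. \<forall>a'\<in>S. (\<Sum>j<i. ordb b (s i - s j)) \<le> (\<Sum>j<i. ordb b (a' - s j)))"

definition alpha :: "int set \<Rightarrow> nat \<Rightarrow> nat \<Rightarrow> enat" where
  "alpha S b k = (let s = (SOME s. b_ordering S b s) in (\<Sum>j<k. ordb b (s k - s j)))"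

definition gfact :: "int set \<Rightarrow> nat set \<Rightarrow> nat \<Rightarrow> nat" where
  "gfact S T k = prodT T (\<lambda>b. epow b (alpha S b k))"

definition gamma :: "nat \<Rightarrow> nat \<Rightarrow> (nat \<Rightarrow> int) \<Rightarrow> enat" where
  "gamma n b a = (\<Sum>j\<in>{..n}. \<Sum>i<j. ordb b (a i - a j))"

end

theory Submission
  imports Defs
begin


lemma ordb_ge_iff: "enat k \<le> ordb b x \<longleftrightarrow> (int b) ^ k dvd x"
proof
  assume "(int b) ^ k dvd x"
  then show "enat k \<le> ordb b x" unfolding ordb_def by (intro Sup_upper) auto
next
  assume h: "enat k \<le> ordb b x"
  show "(int b) ^ k dvd x"
  proof (cases k)
    case 0 then show ?thesis by simp
  next
    case (Suc k')
    with h have "enat k' < ordb b x" by (simp add: Suc_ile_eq)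
    then obtain j where j: "(int b) ^ j dvd x" "k' < j" unfolding ordb_def less_Sup_iff by auto
    then have "(int b) ^ k dvd (int b) ^ j" using Suc by (intro le_imp_power_dvd) auto
    with j show ?thesis using dvd_trans by blast
  qed
qed

lemma enat_all_le_inf: "(\<And>k. enat k \<le> x) \<Longrightarrow> x = \<infinity>"
  by (cases x) (auto, metis Suc_n_not_le_n)

lemma ordb_zero[simp]: "ordb b 0 = \<infinity>"
  by (rule enat_all_le_inf) (simp add: ordb_ge_iff)

lemma ordb_sym: "ordb b (x - y) = ordb b (y - x)"
proof -
  have "{k. int b ^ k dvd x - y} = {k. int b ^ k dvd y - x}"
    by (metis dvd_minus_iff minus_diff_eq)
  then show ?thesis unfolding ordb_def by simp
qed

lemma ordb_ultra: "min (ordb b x) (ordb b y) \<le> ordb b (x + y)"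
proof (rule ccontr)
  assume "\<not> ?thesis"
  then have lt: "ordb b (x + y) < min (ordb b x) (ordb b y)" by (simp only: not_le)
  then obtain k where k: "ordb b (x + y) = enat k" by (cases "ordb b (x + y)") auto
  with lt have "enat (Suc k) \<le> ordb b x" "enat (Suc k) \<le> ordb b y"
    by (auto simp: Suc_ile_eq)
  then have "int b ^ Suc k dvd x + y" by (simp add: ordb_ge_iff)
  then have "enat (Suc k) \<le> ordb b (x + y)" by (simp add: ordb_ge_iff)
  with k show False by simp
qed

lemma ordb_ultra': "min (ordb b (x - y)) (ordb b (y - z)) \<le> ordb b (x - z)"
  using ordb_ultra[of b "x - y" "y - z"] by simp

lemma enat_sum_const_le: "card B \<le> card A \<Longrightarrow> (\<Sum>x\<in>B. (t::enat)) \<le> (\<Sum>x\<in>A. t)"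
  by (simp add: sum_constant mult_right_mono)

lemma enat_minus_plus: "enat t0 \<le> x \<Longrightarrow> x - enat t0 + enat t0 = x"
  by (cases x) auto

lemma enat_minus_mono: "x \<le> y \<Longrightarrow> x - enat t0 \<le> y - enat t0"
  by (cases x; cases y) auto

lemma peel:
  fixes d :: "'x \<Rightarrow> 'x \<Rightarrow> enat" and a s :: "nat \<Rightarrow> 'x"
  assumes "finite I" "finite J" "card J < card I"
    and "\<forall>x y. d x y = d y x" "\<forall>x y z. min (d x y) (d y z) \<le> d x z" "\<forall>x. d x x = \<infinity>"
  shows "\<exists>m\<in>I. (\<Sum>j\<in>J. d (a m) (s j)) \<le> (\<Sum>i\<in>I-{m}. d (a m) (a i))"
  using assms
proof (induction "card I + card J" arbitrary: d I J rule: less_induct)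
  case less
  note fin = less.prems(1,2) and cardlt = less.prems(3)
  note sym = less.prems(4) and ultra = less.prems(5) and refl = less.prems(6)
  from cardlt have "I \<noteq> {}" by auto
  then obtain i0 where i0: "i0 \<in> I" by auto
  define c where "c = a i0"
  define V where "V = (\<lambda>x. d c x) ` (a ` (I - {i0}) \<union> s ` J)"
  have finV: "finite V" unfolding V_def using fin by auto
  show ?case
  proof (cases "V = {}")
    case True
    then have "J = {}" unfolding V_def by auto
    then show ?thesis using i0 by auto
  next
    case False
    define t where "t = Min V"
    have tV: "t \<in> V" unfolding t_def using False finV by simp
    have tI: "\<forall>i\<in>I-{i0}. t \<le> d c (a i)" unfolding t_def V_def using finV V_def by auto
    have tJ: "\<forall>j\<in>J. t \<le> d c (s j)" unfolding t_def V_def using finV V_def by auto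
    show ?thesis
    proof (cases "t = \<infinity>")
      case True
      show ?thesis
      proof (cases "I - {i0} = {}")
        case True
        then have "I = {i0}" using i0 by auto
        then have "card I = 1" by simp
        then have "J = {}" using cardlt fin by auto
        then show ?thesis using i0 by auto
      next
        case False
        then obtain i1 where i1: "i1 \<in> I - {i0}" by auto
        have "d c (a i1) = \<infinity>" using tI i1 \<open>t = \<infinity>\<close> by (cases "d c (a i1)") auto
        then have "\<infinity> \<le> (\<Sum>i\<in>I-{i0}. d (a i0) (a i))"
          using member_le_sum[of i1 "I-{i0}" "\<lambda>i. d (a i0) (a i)"] i1 fin unfolding c_def by auto
        then have "(\<Sum>i\<in>I-{i0}. d (a i0) (a i)) = \<infinity>"
          by (cases "(\<Sum>i\<in>I-{i0}. d (a i0) (a i))") auto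
        then show ?thesis using i0 by (intro bexI[of _ i0]) auto
      qed
    next
      case False
      then obtain t0 where t: "t = enat t0" by auto
      define I1 where "I1 = {i\<in>I. t < d c (a i)}"
      define J1 where "J1 = {j\<in>J. t < d c (s j)}"
      define I2 where "I2 = I - I1"
      define J2 where "J2 = J - J1"
      have i0I1: "i0 \<in> I1" unfolding I1_def using i0 refl t c_def by auto
      have I2J2: "I2 \<union> J2 \<noteq> {}"
        using tV unfolding V_def I2_def J2_def I1_def J1_def using i0 by auto
      have eqt: "d x y = t" if "t < d c x" "t \<le> d c y" "\<not> t < d c y" for x y
      proof -
        have cy: "d c y = t" using that by auto
        have "min (d x c) (d c y) \<le> d x y" using ultra by blast
        then have ge: "t \<le> d x y" using that cy sym by (auto simp: min_def split: if_splits)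
        have "min (d c x) (d x y) \<le> d c y" using ultra by blast
        then have "\<not> t < d x y" using that cy by (auto simp: min_def split: if_splits)
        then show ?thesis using ge by auto
      qed
      have gtt: "t < d x y" if "t < d c x" "t < d c y" for x y
      proof -
        have "min (d x c) (d c y) \<le> d x y" using ultra by blast
        then show ?thesis using that sym by (auto simp: min_def split: if_splits)
      qed
      have finI1: "finite I1" "finite J1" "finite I2" "finite J2"
        using fin unfolding I1_def J1_def I2_def J2_def by auto
      have I1sub: "I1 \<subseteq> I" "J1 \<subseteq> J" unfolding I1_def J1_def by auto
      have cI: "card I = card I1 + card I2" unfolding I2_def
        using card_Diff_subset[OF finI1(1) I1sub(1)] card_mono[OF fin(1) I1sub(1)] by simp
      have cJ: "card J = card J1 + card J2" unfolding J2_def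
        using card_Diff_subset[OF finI1(2) I1sub(2)] card_mono[OF fin(2) I1sub(2)] by simp
      have cI1: "card I1 > 0" using i0I1 finI1 card_gt_0_iff by blast
      define d' where "d' = (\<lambda>x y. d x y - t)"
      have sym': "\<forall>x y. d' x y = d' y x" unfolding d'_def using sym by auto
      have ultra': "\<forall>x y z. min (d' x y) (d' y z) \<le> d' x z"
      proof (intro allI)
        fix x y z
        have "min (d x y) (d y z) \<le> d x z" using ultra by blast
        then have "d x y \<le> d x z \<or> d y z \<le> d x z" by (auto simp: min_def split: if_splits)
        then show "min (d' x y) (d' y z) \<le> d' x z" unfolding d'_def t
          using enat_minus_mono by (metis min.coboundedI1 min.coboundedI2)
      qed
      have refl': "\<forall>x. d' x x = \<infinity>" unfolding d'_def using refl t by simp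
      have Ua: "t \<le> d c (a i)" if "i \<in> I" for i
        using that tI refl c_def by (cases "i = i0") auto
      have Us: "t \<le> d c (s j)" if "j \<in> J" for j using that tJ by auto
      have get: "t \<le> d x y" if "t \<le> d c x" "t \<le> d c y" for x y
      proof -
        have "min (d x c) (d c y) \<le> d x y" using ultra by blast
        then show ?thesis using that sym by (auto simp: min_def split: if_splits)
      qed
      have splitd: "d x y = d' x y + t" if "t \<le> d c x" "t \<le> d c y" for x y
        unfolding d'_def t using get[OF that] t by (simp add: enat_minus_plus)
      have cross0: "d' x y = 0" if "t < d c x" "t \<le> d c y" "\<not> t < d c y" for x y
        unfolding d'_def using eqt[OF that] t by (simp add: zero_enat_def)
      have reduce: "(\<Sum>j\<in>J. d (a m) (s j)) \<le> (\<Sum>i\<in>I-{m}. d (a m) (a i))"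
        if m: "m \<in> I" and le': "(\<Sum>j\<in>J. d' (a m) (s j)) \<le> (\<Sum>i\<in>I-{m}. d' (a m) (a i))" for m
      proof -
        have "(\<Sum>j\<in>J. d (a m) (s j)) = (\<Sum>j\<in>J. d' (a m) (s j)) + (\<Sum>j\<in>J. t)"
          unfolding sum.distrib[symmetric] by (rule sum.cong) (auto intro!: splitd Ua[OF m] Us)
        moreover have "(\<Sum>i\<in>I-{m}. d (a m) (a i)) = (\<Sum>i\<in>I-{m}. d' (a m) (a i)) + (\<Sum>i\<in>I-{m}. t)"
          unfolding sum.distrib[symmetric] by (rule sum.cong) (auto intro!: splitd Ua[OF m] Ua)
        moreover have "(\<Sum>j\<in>J. t) \<le> (\<Sum>i\<in>I-{m}. t)"
          using cardlt m fin by (intro enat_sum_const_le) auto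
        ultimately show ?thesis using le' by (simp add: add_mono)
      qed
      show ?thesis
      proof (cases "card J1 < card I1")
        case True
        have lt: "card I1 + card J1 < card I + card J"
          using I2J2 cI cJ finI1 by auto
        from less.hyps[OF lt finI1(1,2) True sym' ultra' refl']
        obtain m where m: "m \<in> I1" and
          mle: "(\<Sum>j\<in>J1. d' (a m) (s j)) \<le> (\<Sum>i\<in>I1-{m}. d' (a m) (a i))" by blast
        have mI: "t < d c (a m)" using m unfolding I1_def by auto
        have Z1: "(\<Sum>j\<in>J2. d' (a m) (s j)) = 0"
        proof (rule sum.neutral, rule ballI)
          fix j assume "j \<in> J2"
          then have "j \<in> J" "\<not> t < d c (s j)" unfolding J2_def J1_def by auto
          then show "d' (a m) (s j) = 0" using cross0[OF mI] Us by blast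
        qed
        have Z2: "(\<Sum>i\<in>I2. d' (a m) (a i)) = 0"
        proof (rule sum.neutral, rule ballI)
          fix i assume "i \<in> I2"
          then have "i \<in> I" "\<not> t < d c (a i)" unfolding I2_def I1_def by auto
          then show "d' (a m) (a i) = 0" using cross0[OF mI] Ua by blast
        qed
        have SJ: "(\<Sum>j\<in>J. d' (a m) (s j)) = (\<Sum>j\<in>J1. d' (a m) (s j)) + (\<Sum>j\<in>J2. d' (a m) (s j))"
          unfolding J2_def using sum.subset_diff[OF I1sub(2) fin(2)] by (simp add: add.commute)
        have SI: "(\<Sum>i\<in>I-{m}. d' (a m) (a i)) = (\<Sum>i\<in>I1-{m}. d' (a m) (a i)) + (\<Sum>i\<in>I2. d' (a m) (a i))"
        proof -
          have "(I - {m}) - (I1 - {m}) = I2" unfolding I2_def using m by auto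
          moreover have "I1 - {m} \<subseteq> I - {m}" using I1sub by auto
          ultimately show ?thesis using sum.subset_diff[of "I1 - {m}" "I - {m}"] fin by (simp add: add.commute)
        qed
        have "(\<Sum>j\<in>J. d' (a m) (s j)) \<le> (\<Sum>i\<in>I-{m}. d' (a m) (a i))"
          unfolding SJ SI Z1 Z2 using mle by simp
        then show ?thesis using m I1sub reduce by blast
      next
        case False
        then have lt2: "card J2 < card I2" using cI cJ cardlt by auto
        have lt: "card I2 + card J2 < card I + card J"
          using cI cJ cI1 by linarith
        from less.hyps[OF lt finI1(3,4) lt2 sym' ultra' refl']
        obtain m where m: "m \<in> I2" and
          mle: "(\<Sum>j\<in>J2. d' (a m) (s j)) \<le> (\<Sum>i\<in>I2-{m}. d' (a m) (a i))" by blast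
        have mI: "m \<in> I" "\<not> t < d c (a m)" using m unfolding I2_def I1_def by auto
        have Z1: "(\<Sum>j\<in>J1. d' (a m) (s j)) = 0"
        proof (rule sum.neutral, rule ballI)
          fix j assume "j \<in> J1"
          then have "t < d c (s j)" unfolding J1_def by auto
          then have "d' (s j) (a m) = 0" using cross0 Ua[OF mI(1)] mI(2) by blast
          then show "d' (a m) (s j) = 0" using sym' by metis
        qed
        have Z2: "(\<Sum>i\<in>I1. d' (a m) (a i)) = 0"
        proof (rule sum.neutral, rule ballI)
          fix i assume "i \<in> I1"
          then have "t < d c (a i)" unfolding I1_def by auto
          then have "d' (a i) (a m) = 0" using cross0 Ua[OF mI(1)] mI(2) by blast
          then show "d' (a m) (a i) = 0" using sym' by metis
        qed
        have SJ: "(\<Sum>j\<in>J. d' (a m) (s j)) = (\<Sum>j\<in>J1. d' (a m) (s j)) + (\<Sum>j\<in>J2. d' (a m) (s j))"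
          unfolding J2_def using sum.subset_diff[OF I1sub(2) fin(2)] by (simp add: add.commute)
        have SI: "(\<Sum>i\<in>I-{m}. d' (a m) (a i)) = (\<Sum>i\<in>I1. d' (a m) (a i)) + (\<Sum>i\<in>I2-{m}. d' (a m) (a i))"
        proof -
          have "(I - {m}) - I1 = I2 - {m}" unfolding I2_def by auto
          moreover have "I1 \<subseteq> I - {m}" using I1sub m unfolding I2_def by auto
          ultimately show ?thesis using sum.subset_diff[of I1 "I - {m}"] fin by (simp add: add.commute)
        qed
        have "(\<Sum>j\<in>J. d' (a m) (s j)) \<le> (\<Sum>i\<in>I-{m}. d' (a m) (a i))"
          unfolding SJ SI Z1 Z2 using mle by simp
        then show ?thesis using mI reduce by blast
      qed
    qed
  qed
qed



definition PP :: "(nat \<Rightarrow> nat \<Rightarrow> enat) \<Rightarrow> nat set \<Rightarrow> enat" where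
  "PP D I = (\<Sum>j\<in>I. \<Sum>i\<in>{i\<in>I. i<j}. D i j)"

lemma PP_remove:
  assumes fin: "finite I" and m: "m \<in> I" and sym: "\<forall>i j. D i j = D j i"
  shows "PP D I = PP D (I - {m}) + (\<Sum>i\<in>I-{m}. D m i)"
proof -
  have inner: "(\<Sum>i\<in>{i\<in>I. i<j}. D i j) = (\<Sum>i\<in>{i\<in>I-{m}. i<j}. D i j) + (if m<j then D m j else 0)"
    if "j \<in> I - {m}" for j
  proof (cases "m < j")
    case True
    then have "{i\<in>I. i<j} = insert m {i\<in>I-{m}. i<j}" using m by auto
    then show ?thesis using True fin by (simp add: add.commute)
  next
    case False
    then have "{i\<in>I. i<j} = {i\<in>I-{m}. i<j}" by auto
    then show ?thesis using False by simp
  qed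
  have "PP D I = (\<Sum>i\<in>{i\<in>I. i<m}. D i m) + (\<Sum>j\<in>I-{m}. \<Sum>i\<in>{i\<in>I. i<j}. D i j)"
    unfolding PP_def using sum.remove[OF fin m] by simp
  also have "(\<Sum>j\<in>I-{m}. \<Sum>i\<in>{i\<in>I. i<j}. D i j)
      = PP D (I - {m}) + (\<Sum>j\<in>I-{m}. if m<j then D m j else 0)"
    unfolding PP_def by (simp add: inner sum.distrib)
  also have "(\<Sum>i\<in>{i\<in>I. i<m}. D i m) = (\<Sum>i\<in>I-{m}. if i<m then D i m else 0)"
  proof -
    have "{i\<in>I. i<m} = {i\<in>I-{m}. i<m}" by auto
    moreover have "(\<Sum>i\<in>{i\<in>I-{m}. i<m}. D i m) = (\<Sum>i\<in>I-{m}. if i<m then D i m else 0)"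
      by (rule sum.inter_filter) (use fin in auto)
    ultimately show ?thesis by simp
  qed
  finally have "PP D I = PP D (I - {m}) +
     ((\<Sum>i\<in>I-{m}. if i<m then D i m else 0) + (\<Sum>j\<in>I-{m}. if m<j then D m j else 0))"
    by (simp add: ac_simps)
  also have "(\<Sum>i\<in>I-{m}. if i<m then D i m else 0) + (\<Sum>j\<in>I-{m}. if m<j then D m j else 0)
      = (\<Sum>i\<in>I-{m}. D m i)"
    unfolding sum.distrib[symmetric] by (rule sum.cong) (auto simp: sym[rule_format, of _ m])
  finally show ?thesis .
qed

definition pick :: "int set \<Rightarrow> nat \<Rightarrow> int list \<Rightarrow> int" where
  "pick S b L = (SOME x. x \<in> S \<and> (\<forall>y\<in>S. (\<Sum>j<length L. ordb b (x - L!j)) \<le> (\<Sum>j<length L. ordb b (y - L!j))))"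

lemma pick_spec:
  assumes "S \<noteq> {}"
  shows "pick S b L \<in> S \<and> (\<forall>y\<in>S. (\<Sum>j<length L. ordb b (pick S b L - L!j)) \<le> (\<Sum>j<length L. ordb b (y - L!j)))"
proof -
  define f where "f = (\<lambda>y. (\<Sum>j<length L. ordb b (y - L!j)))"
  define v where "v = (LEAST v. \<exists>y\<in>S. f y = v)"
  have ex: "\<exists>v. \<exists>y\<in>S. f y = v" using assms by auto
  from LeastI_ex[OF ex] obtain x where x: "x \<in> S" "f x = v" unfolding v_def by blast
  have "\<forall>y\<in>S. f x \<le> f y" using x unfolding v_def by (auto intro: Least_le)
  then have "\<exists>x. x \<in> S \<and> (\<forall>y\<in>S. f x \<le> f y)" using x by blast
  then show ?thesis unfolding pick_def f_def by (rule someI_ex)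
qed

primrec bseq :: "int set \<Rightarrow> nat \<Rightarrow> nat \<Rightarrow> int list" where
  "bseq S b 0 = [SOME x. x \<in> S]"
| "bseq S b (Suc k) = bseq S b k @ [pick S b (bseq S b k)]"

lemma length_bseq[simp]: "length (bseq S b k) = Suc k"
  by (induction k) auto

lemma bseq_prefix: "i \<le> k \<Longrightarrow> bseq S b k ! i = bseq S b i ! i"
proof (induction k)
  case 0 then show ?case by simp
next
  case (Suc k)
  show ?case
  proof (cases "i = Suc k")
    case False
    then have "i < Suc k" using Suc by auto
    then show ?thesis using Suc by (simp add: nth_append)
  qed simp
qed

lemma b_ordering_exists:
  assumes "S \<noteq> {}"
  shows "\<exists>s. b_ordering S b s"
proof -
  define s where "s = (\<lambda>i. bseq S b i ! i)"
  have s0: "s 0 \<in> S" unfolding s_def using assms by (simp add: some_in_eq)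
  have sSuc: "s (Suc k) = pick S b (bseq S b k)" for k
    unfolding s_def by (simp add: nth_append)
  have L: "bseq S b k ! j = s j" if "j < Suc k" for j k
    unfolding s_def by (rule bseq_prefix) (use that in simp)
  have "b_ordering S b s"
    unfolding b_ordering_def
  proof (intro conjI allI impI ballI)
    fix i show "s i \<in> S" using s0 sSuc pick_spec[OF assms] by (cases i) auto
  next
    fix i :: nat and a' assume i: "1 \<le> i" and a': "a' \<in> S"
    then obtain k where k: "i = Suc k" by (cases i) auto
    have "(\<Sum>j<i. ordb b (s i - s j)) = (\<Sum>j<length (bseq S b k). ordb b (pick S b (bseq S b k) - bseq S b k ! j))"
      unfolding k sSuc by (rule sum.cong) (auto simp: L)
    also have "\<dots> \<le> (\<Sum>j<length (bseq S b k). ordb b (a' - bseq S b k ! j))"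
      using pick_spec[OF assms] a' by blast
    also have "\<dots> = (\<Sum>j<i. ordb b (a' - s j))"
      unfolding k by (rule sum.cong) (auto simp: L)
    finally show "(\<Sum>j<i. ordb b (s i - s j)) \<le> (\<Sum>j<i. ordb b (a' - s j))" .
  qed
  then show ?thesis by blast
qed

lemma mainM:
  assumes bo: "b_ordering S b s"
  shows "finite I \<Longrightarrow> card I = Suc n \<Longrightarrow> (\<forall>i\<in>I. a i \<in> S) \<Longrightarrow>
    (\<Sum>k\<le>n. \<Sum>j<k. ordb b (s k - s j)) \<le> PP (\<lambda>i j. ordb b (a i - a j)) I"
proof (induction n arbitrary: I)
  case 0 then show ?case by simp
next
  case (Suc n)
  have sym: "\<forall>x y. ordb b (x - y) = ordb b (y - x)" using ordb_sym by blast
  have ultra: "\<forall>x y z. min (ordb b (x - y)) (ordb b (y - z)) \<le> ordb b (x - z)"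
    using ordb_ultra' by blast
  have refl: "\<forall>x. ordb b (x - x) = \<infinity>" by simp
  have "card {..<Suc n} < card I" using Suc.prems by simp
  from peel[OF Suc.prems(1) _ this, of "\<lambda>x y. ordb b (x - y)" a s, OF _ sym ultra refl]
  obtain m where m: "m \<in> I" and
    H: "(\<Sum>j<Suc n. ordb b (a m - s j)) \<le> (\<Sum>i\<in>I-{m}. ordb b (a m - a i))" by auto
  have A: "(\<Sum>j<Suc n. ordb b (s (Suc n) - s j)) \<le> (\<Sum>j<Suc n. ordb b (a m - s j))"
  proof -
    have B: "\<forall>i\<ge>1. \<forall>a'\<in>S. (\<Sum>j<i. ordb b (s i - s j)) \<le> (\<Sum>j<i. ordb b (a' - s j))"
      using bo unfolding b_ordering_def by blast
    have "1 \<le> Suc n" by simp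
    moreover have "a m \<in> S" using m Suc.prems(3) by blast
    ultimately show ?thesis using B by blast
  qed
  have IH: "(\<Sum>k\<le>n. \<Sum>j<k. ordb b (s k - s j)) \<le> PP (\<lambda>i j. ordb b (a i - a j)) (I - {m})"
    using Suc.IH[of "I - {m}"] Suc.prems m by auto
  have E1: "PP (\<lambda>i j. ordb b (a i - a j)) I = PP (\<lambda>i j. ordb b (a i - a j)) (I - {m}) + (\<Sum>i\<in>I-{m}. ordb b (a m - a i))"
    by (rule PP_remove[OF Suc.prems(1) m]) (use ordb_sym in blast)
  have E2: "(\<Sum>k\<le>Suc n. \<Sum>j<k. ordb b (s k - s j)) = (\<Sum>k\<le>n. \<Sum>j<k. ordb b (s k - s j)) + (\<Sum>j<Suc n. ordb b (s (Suc n) - s j))"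
    by (simp only: sum.atMost_Suc)
  have "(\<Sum>j<Suc n. ordb b (s (Suc n) - s j)) \<le> (\<Sum>i\<in>I-{m}. ordb b (a m - a i))"
    using A H by (rule order_trans)
  from add_mono[OF IH this] show ?case unfolding E1 E2 .
qed



lemma key_ineq:
  assumes "\<forall>i\<le>n. a i \<in> S"
  shows "(\<Sum>k\<le>n. alpha S b k) \<le> gamma n b a"
proof -
  have "S \<noteq> {}" using assms by auto
  then have "\<exists>s. b_ordering S b s" by (rule b_ordering_exists)
  then have bo: "b_ordering S b (SOME s. b_ordering S b s)" by (rule someI_ex)
  define s where "s = (SOME s. b_ordering S b s)"
  have al: "alpha S b k = (\<Sum>j<k. ordb b (s k - s j))" for k
    unfolding alpha_def s_def Let_def by simp
  have "(\<Sum>k\<le>n. \<Sum>j<k. ordb b (s k - s j)) \<le> PP (\<lambda>i j. ordb b (a i - a j)) {..n}"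
    using mainM[OF bo[folded s_def], of "{..n}" n a] assms by auto
  also have "PP (\<lambda>i j. ordb b (a i - a j)) {..n} = gamma n b a"
    unfolding PP_def gamma_def
  proof (rule sum.cong)
    fix j assume "j \<in> {..n}"
    then have "{i\<in>{..n}. i<j} = {..<j}" by auto
    then show "(\<Sum>i\<in>{i\<in>{..n}. i<j}. ordb b (a i - a j)) = (\<Sum>i<j. ordb b (a i - a j))" by simp
  qed simp
  finally show ?thesis unfolding al .
qed

lemma epow_1[simp]: "epow 1 x = 1"
  unfolding epow_def by (cases x) auto

lemma epow_Suc0[simp]: "epow (Suc 0) x = Suc 0"
  using epow_1 by simp

lemma epow_inf: "b \<noteq> 1 \<Longrightarrow> epow b \<infinity> = 0"
  unfolding epow_def by simp

lemma epow_enat[simp]: "epow b (enat m) = b ^ m"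
  unfolding epow_def by simp

lemma enat_sum_of: "(\<Sum>k\<in>K. enat (y k)) = enat (\<Sum>k\<in>K. y k)"
  by (induction K rule: infinite_finite_induct) (auto simp: zero_enat_def)

lemma epow_dvd:
  assumes fin: "finite K" and nz: "epow b g \<noteq> 0" and le: "(\<Sum>k\<in>K. x k) \<le> g"
  shows "(\<Prod>k\<in>K. epow b (x k)) dvd epow b g"
proof (cases "b = 1")
  case True then show ?thesis by simp
next
  case False
  then obtain g0 where g: "g = enat g0" using nz epow_inf by (cases g) auto
  have xle: "x k \<le> g" if "k \<in> K" for k
    using member_le_sum[of k K x] that fin le by (meson order_trans zero_le)
  define y where "y = (\<lambda>k. the_enat (x k))"
  have xy: "x k = enat (y k)" if "k \<in> K" for k
    using xle[OF that] g unfolding y_def by (cases "x k") auto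
  have "(\<Prod>k\<in>K. epow b (x k)) = (\<Prod>k\<in>K. b ^ y k)"
    by (rule prod.cong) (auto simp: xy)
  also have "\<dots> = b ^ (\<Sum>k\<in>K. y k)" by (simp add: power_sum)
  finally have P: "(\<Prod>k\<in>K. epow b (x k)) = b ^ (\<Sum>k\<in>K. y k)" .
  have "(\<Sum>k\<in>K. x k) = enat (\<Sum>k\<in>K. y k)"
  proof -
    have "(\<Sum>k\<in>K. x k) = (\<Sum>k\<in>K. enat (y k))" by (rule sum.cong) (auto simp: xy)
    then show ?thesis by (simp add: enat_sum_of)
  qed
  then have "(\<Sum>k\<in>K. y k) \<le> g0" using le g by simp
  then show ?thesis unfolding P g by (simp add: le_imp_power_dvd)
qed

lemma epow_le:
  assumes nz: "epow b g \<noteq> 0" and le: "x \<le> g"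
  shows "epow b x \<noteq> 0 \<and> (epow b x \<noteq> 1 \<longrightarrow> epow b g \<noteq> 1)"
proof (cases "b = 1")
  case True then show ?thesis by simp
next
  case False
  then obtain g0 where g: "g = enat g0" using nz epow_inf by (cases g) auto
  with le obtain x0 where x: "x = enat x0" "x0 \<le> g0" by (cases x) auto
  show ?thesis
  proof (cases "b = 0")
    case True
    then have "g0 = 0" using nz g by (cases g0) auto
    then show ?thesis using x True by simp
  next
    case b0: False
    then have "b \<ge> 2" using False by auto
    then show ?thesis using x g
      by (auto simp: power_eq_1_iff)
  qed
qed



lemma finite_supp:
  assumes nz: "\<forall>b\<in>T. epow b (gamma n b a) \<noteq> 0"
  shows "finite {b\<in>T. epow b (gamma n b a) \<noteq> 1}"
proof (rule finite_subset)
  show "finite (\<Union>i\<le>n. \<Union>j\<le>n. {..nat \<bar>a i - a j\<bar>})" by auto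
  show "{b\<in>T. epow b (gamma n b a) \<noteq> 1} \<subseteq> (\<Union>i\<le>n. \<Union>j\<le>n. {..nat \<bar>a i - a j\<bar>})"
  proof
    fix b assume bF: "b \<in> {b\<in>T. epow b (gamma n b a) \<noteq> 1}"
    then have b1: "b \<noteq> 1" by auto
    from bF nz have nz': "epow b (gamma n b a) \<noteq> 0" by auto
    then obtain g where g: "gamma n b a = enat g" using b1 epow_inf by (cases "gamma n b a") auto
    have "b ^ g \<noteq> 1" "b ^ g \<noteq> 0" using bF nz' g by auto
    then have g0: "g \<noteq> 0" by auto
    then have "gamma n b a \<noteq> 0" using g by (simp add: zero_enat_def)
    then obtain j i where ji: "j \<in> {..n}" "i < j" and t0: "ordb b (a i - a j) \<noteq> 0"
      unfolding gamma_def by (auto simp: sum_eq_0_iff)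
    have "ordb b (a i - a j) \<le> (\<Sum>i<j. ordb b (a i - a j))"
      using ji by (intro member_le_sum) auto
    also have "\<dots> \<le> gamma n b a" unfolding gamma_def
      using ji by (intro member_le_sum[of j "{..n}" "\<lambda>j. \<Sum>i<j. ordb b (a i - a j)"]) auto
    finally have "ordb b (a i - a j) \<noteq> \<infinity>" using g by (cases "ordb b (a i - a j)") auto
    then have ne: "a i - a j \<noteq> 0" by auto
    have "enat 1 \<le> ordb b (a i - a j)" using t0 by (cases "ordb b (a i - a j)") (auto simp: one_enat_def zero_enat_def)
    then have "int b dvd a i - a j" using ordb_ge_iff[of 1 b] by simp
    then have "\<bar>int b\<bar> \<le> \<bar>a i - a j\<bar>" using ne by (rule dvd_imp_le_int[rotated])
    then have "b \<le> nat \<bar>a i - a j\<bar>" by auto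
    then show "b \<in> (\<Union>i\<le>n. \<Union>j\<le>n. {..nat \<bar>a i - a j\<bar>})" using ji by auto
  qed
qed

theorem theorem3p15:
  fixes S :: "int set" and T :: "nat set" and n :: nat and a :: "nat \<Rightarrow> int"
  assumes "\<forall>i\<le>n. a i \<in> S"
  shows "(\<Prod>k\<le>n. gfact S T k) dvd prodT T (\<lambda>b. epow b (gamma n b a))"
proof (cases "\<exists>b\<in>T. epow b (gamma n b a) = 0")
  case True
  then show ?thesis unfolding prodT_def by simp
next
  case False
  then have nz: "\<forall>b\<in>T. epow b (gamma n b a) \<noteq> 0" by auto
  define F where "F = {b\<in>T. epow b (gamma n b a) \<noteq> 1}"
  have finF: "finite F" unfolding F_def using finite_supp[OF nz] .
  have R: "prodT T (\<lambda>b. epow b (gamma n b a)) = (\<Prod>b\<in>F. epow b (gamma n b a))"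
    unfolding prodT_def F_def using False by (simp only: if_False)
  have ale: "alpha S b k \<le> gamma n b a" if "k \<le> n" for b k
  proof -
    have "alpha S b k \<le> (\<Sum>k\<le>n. alpha S b k)" using that by (intro member_le_sum) auto
    also have "\<dots> \<le> gamma n b a" by (rule key_ineq[OF assms])
    finally show ?thesis .
  qed
  have G: "gfact S T k = (\<Prod>b\<in>F. epow b (alpha S b k))" if k: "k \<le> n" for k
  proof -
    have props: "epow b (alpha S b k) \<noteq> 0 \<and> (epow b (alpha S b k) \<noteq> 1 \<longrightarrow> epow b (gamma n b a) \<noteq> 1)"
      if "b \<in> T" for b
      using epow_le[OF _ ale[OF k]] nz that by blast
    then have "\<not> (\<exists>b\<in>T. epow b (alpha S b k) = 0)" by blast
    then have "gfact S T k = (\<Prod>b\<in>{b\<in>T. epow b (alpha S b k) \<noteq> 1}. epow b (alpha S b k))"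
      unfolding gfact_def prodT_def by (simp only: if_False)
    also have "\<dots> = (\<Prod>b\<in>F. epow b (alpha S b k))"
    proof (rule prod.mono_neutral_left[OF finF])
      show "{b\<in>T. epow b (alpha S b k) \<noteq> 1} \<subseteq> F" unfolding F_def using props by blast
      show "\<forall>i\<in>F - {b\<in>T. epow b (alpha S b k) \<noteq> 1}. epow i (alpha S i k) = 1"
        unfolding F_def by auto
    qed
    finally show ?thesis .
  qed
  have "(\<Prod>k\<le>n. gfact S T k) = (\<Prod>k\<le>n. \<Prod>b\<in>F. epow b (alpha S b k))"
    by (rule prod.cong) (auto simp: G)
  also have "\<dots> = (\<Prod>b\<in>F. \<Prod>k\<le>n. epow b (alpha S b k))"
    by (rule prod.swap)
  also have "\<dots> dvd (\<Prod>b\<in>F. epow b (gamma n b a))"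
  proof (rule prod_dvd_prod)
    fix b assume "b \<in> F"
    then have "epow b (gamma n b a) \<noteq> 0" using nz unfolding F_def by auto
    then show "(\<Prod>k\<le>n. epow b (alpha S b k)) dvd epow b (gamma n b a)"
      by (rule epow_dvd[OF finite_atMost _ key_ineq[OF assms]])
  qed
  finally show ?thesis unfolding R .
qed

end
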